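(* Let $\pi:L_{\mathcal F}\to L_{\mathcal G}$ satisfy (REG). For any fixed, at most countable, family $\{\Gamma(h)\}_{h\ge1}$ of finite partitions of $\Omega$ into $\mathcal G$-measurable sets, any $X\in L_{\mathcal F}$ and any $Q\in L^*_{\mathcal F}\cap\mathcal P$, there exists a sequence $(\xi^Q_m)_{m\ge1}\subseteq L_{\mathcal F}$ such that $E_Q[\xi^Q_m\mid\mathcal G]\ge_Q E_Q[X\mid\mathcal G]$ for all $m\ge1$, $\pi(\xi^Q_m)\downarrow K(X,Q)$ as $m\uparrow\infty$, and for all $h$, $\pi^{\Gamma(h)}(\xi^Q_m)\downarrow K^{\Gamma(h)}(X,Q)$ as $m\uparrow\infty$.
   Context: Let $(\Omega,\mathcal F,\mathbb P)$ be a probability space and $\mathcal G\subseteq\mathcal F$ a sub-$\sigma$-algebra. (In)equalities hold $\mathbb P$-a.s. unless a measure is indicated ($\ge_Q$: $Q$-a.s.); $\inf$ is the $\mathbb P$-essential infimum. $L_{\mathcal F}\subseteq L^0(\Omega,\mathcal F,\mathbb P)$, $L_{\mathcal G}\subseteq L^0(\Omega,\mathcal G,\mathbb P)$ are vector lattices closed under multiplication by indicators of $\mathcal F$- (resp. $\mathcal G$-) measurable sets; the order continuous dual $L^*_{\mathcal F}$ of $(L_{\mathcal F},\ge)$ is a lattice contained in $L^1(\Omega,\mathcal F,\mathbb P)$ (functionals $X\mapsto E_{\mathbb P}[ZX]$), closed under multiplication by indicators of sets in $\mathcal F$. $\mathcal P$ = densities of probabilities $Q\ll\mathbb P$. (REG):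 $\pi(X\mathbf 1_A+Y\mathbf 1_{A^c})=\pi(X)\mathbf 1_A+\pi(Y)\mathbf 1_{A^c}$ for $A\in\mathcal G$. $K(X,Q):=\inf_{\xi\in L_{\mathcal F}}\{\pi(\xi)\mid E_Q[\xi\mid\mathcal G]\ge_Q E_Q[X\mid\mathcal G]\}$. For $A\in\mathcal G$, $\pi_A(X):=\operatorname{ess\,sup}_{\omega\in A}\pi(X)(\omega)$; for a finite $\mathcal G$-measurable partition $\Gamma$, $\pi^\Gamma(X):=\sum_{A\in\Gamma}\pi_A(X)\mathbf 1_A$ and $K^\Gamma(X,Q):=\inf_{\xi\in L_{\mathcal F}}\{\pi^\Gamma(\xi)\mid E_Q[\xi\mid\mathcal G]\ge_Q E_Q[X\mid\mathcal G]\}$. *)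

theory Defs
  imports "HOL-Probability.Probability"
begin

text \<open>A vector lattice of (representatives of) random variables that are N-measurable,
  closed under multiplication by indicators of N-measurable sets, and closed under
  P-a.s. equality (so that it is really a set of equivalence classes of L0).\<close>
definition rv_lattice :: "'a measure \<Rightarrow> 'a measure \<Rightarrow> ('a \<Rightarrow> real) set \<Rightarrow> bool" where
  "rv_lattice P N L \<longleftrightarrow>
     L \<subseteq> borel_measurable N \<and>
     (\<lambda>x. 0) \<in> L \<and>
     (\<forall>X\<in>L. \<forall>Y\<in>L. (\<lambda>x. X x + Y x) \<in> L) \<and>
     (\<forall>X\<in>L. \<forall>c::real. (\<lambda>x. c * X x) \<in> L) \<and>
     (\<forall>X\<in>L. \<forall>Y\<in>L. (\<lambda>x. max (X x) (Y x)) \<in> L) \<and>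
     (\<forall>X\<in>L. \<forall>A\<in>sets N. (\<lambda>x. indicator A x * X x) \<in> L) \<and>
     (\<forall>X\<in>L. \<forall>Y\<in>borel_measurable N. (AE x in P. X x = Y x) \<longrightarrow> Y \<in> L)"

text \<open>Densities of probability measures Q absolutely continuous w.r.t. P.\<close>
definition prob_densities :: "'a measure \<Rightarrow> ('a \<Rightarrow> real) set" where
  "prob_densities P = {Z. Z \<in> borel_measurable P \<and> (AE x in P. 0 \<le> Z x) \<and> integral\<^sup>L P Z = 1}"

definition dens_meas :: "'a measure \<Rightarrow> ('a \<Rightarrow> real) \<Rightarrow> 'a measure" where
  "dens_meas P Z = density P (\<lambda>x. ennreal (Z x))"

definition is_ess_inf :: "'a measure \<Rightarrow> 'a measure \<Rightarrow> ('a \<Rightarrow> ereal) set \<Rightarrow> ('a \<Rightarrow> ereal) \<Rightarrow> bool" where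
  "is_ess_inf P N S Y \<longleftrightarrow>
     Y \<in> borel_measurable N \<and>
     (\<forall>f\<in>S. AE x in P. Y x \<le> f x) \<and>
     (\<forall>Y'\<in>borel_measurable N. (\<forall>f\<in>S. AE x in P. Y' x \<le> f x) \<longrightarrow> (AE x in P. Y' x \<le> Y x))"

definition ess_inf_fam :: "'a measure \<Rightarrow> 'a measure \<Rightarrow> ('a \<Rightarrow> ereal) set \<Rightarrow> ('a \<Rightarrow> ereal)" where
  "ess_inf_fam P N S = (SOME Y. is_ess_inf P N S Y)"

definition admissible :: "'a measure \<Rightarrow> 'a measure \<Rightarrow> ('a \<Rightarrow> real) set \<Rightarrow> ('a \<Rightarrow> real)
    \<Rightarrow> ('a \<Rightarrow> real) \<Rightarrow> ('a \<Rightarrow> real) \<Rightarrow> bool" where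
  "admissible P G LF X Z \<xi> \<longleftrightarrow> \<xi> \<in> LF \<and>
     (AE x in dens_meas P Z. real_cond_exp (dens_meas P Z) G \<xi> x \<ge> real_cond_exp (dens_meas P Z) G X x)"

definition Kfun :: "'a measure \<Rightarrow> 'a measure \<Rightarrow> ('a \<Rightarrow> real) set \<Rightarrow> (('a \<Rightarrow> real) \<Rightarrow> ('a \<Rightarrow> real))
    \<Rightarrow> ('a \<Rightarrow> real) \<Rightarrow> ('a \<Rightarrow> real) \<Rightarrow> ('a \<Rightarrow> ereal)" where
  "Kfun P G LF \<pi> X Z = ess_inf_fam P G {(\<lambda>x. ereal (\<pi> \<xi> x)) | \<xi>. admissible P G LF X Z \<xi>}"

definition pi_on :: "'a measure \<Rightarrow> (('a \<Rightarrow> real) \<Rightarrow> ('a \<Rightarrow> real)) \<Rightarrow> 'a set \<Rightarrow> ('a \<Rightarrow> real) \<Rightarrow> ereal" where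
  "pi_on P \<pi> A X = Inf {z::ereal. AE x in P. x \<in> A \<longrightarrow> ereal (\<pi> X x) \<le> z}"

definition pi_part :: "'a measure \<Rightarrow> (('a \<Rightarrow> real) \<Rightarrow> ('a \<Rightarrow> real)) \<Rightarrow> 'a set set \<Rightarrow> ('a \<Rightarrow> real) \<Rightarrow> ('a \<Rightarrow> ereal)" where
  "pi_part P \<pi> \<Gamma> X = (\<lambda>x. \<Sum>A\<in>\<Gamma>. if x \<in> A then pi_on P \<pi> A X else 0)"

definition Kpart :: "'a measure \<Rightarrow> 'a measure \<Rightarrow> ('a \<Rightarrow> real) set \<Rightarrow> (('a \<Rightarrow> real) \<Rightarrow> ('a \<Rightarrow> real))
    \<Rightarrow> 'a set set \<Rightarrow> ('a \<Rightarrow> real) \<Rightarrow> ('a \<Rightarrow> real) \<Rightarrow> ('a \<Rightarrow> ereal)" where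
  "Kpart P G LF \<pi> \<Gamma> X Z = ess_inf_fam P G {pi_part P \<pi> \<Gamma> \<xi> | \<xi>. admissible P G LF X Z \<xi>}"

definition finite_G_partition :: "'a measure \<Rightarrow> 'a set set \<Rightarrow> bool" where
  "finite_G_partition G \<Gamma> \<longleftrightarrow> finite \<Gamma> \<and> \<Gamma> \<subseteq> sets G \<and> \<Union>\<Gamma> = space G \<and>
     (\<forall>A\<in>\<Gamma>. \<forall>B\<in>\<Gamma>. A \<noteq> B \<longrightarrow> A \<inter> B = {})"

end

theory Submission
  imports Defs
begin

locale L31 =
  fixes P G :: "'a measure" and LF :: "('a \<Rightarrow> real) set"
    and \<pi> :: "('a \<Rightarrow> real) \<Rightarrow> ('a \<Rightarrow> real)" and X Z :: "'a \<Rightarrow> real"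
  assumes P: "prob_space P"
    and G: "subalgebra P G"
    and LF: "rv_lattice P P LF"
    and piG: "\<forall>Y\<in>LF. \<pi> Y \<in> borel_measurable G"
    and dual: "\<forall>Y\<in>LF. integrable P (\<lambda>x. Z x * Y x)"
    and REG: "\<forall>Y1\<in>LF. \<forall>Y2\<in>LF. \<forall>A\<in>sets G.
       AE x in P. \<pi> (\<lambda>y. indicator A y * Y1 y + indicator (space P - A) y * Y2 y) x
                 = indicator A x * \<pi> Y1 x + indicator (space P - A) x * \<pi> Y2 x"
    and X: "X \<in> LF"
    and Zd: "Z \<in> prob_densities P"
begin

abbreviation "Q \<equiv> dens_meas P Z"
abbreviation "adm \<equiv> admissible P G LF X Z"

lemma Zm[measurable]: "Z \<in> borel_measurable P" using Zd by (simp add: prob_densities_def)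
lemma Znn: "AE x in P. 0 \<le> Z x" using Zd by (simp add: prob_densities_def)
lemma Zint: "integrable P Z"
  using Zd not_integrable_integral_eq by (fastforce simp: prob_densities_def)

lemma sets_Q[simp]: "sets Q = sets P" and space_Q[simp]: "space Q = space P"
  by (simp_all add: dens_meas_def)

lemma LF_meas: "Y \<in> LF \<Longrightarrow> Y \<in> borel_measurable P"
  using LF by (auto simp: rv_lattice_def)

lemma LF_add: "Y1 \<in> LF \<Longrightarrow> Y2 \<in> LF \<Longrightarrow> (\<lambda>x. Y1 x + Y2 x) \<in> LF"
  and LF_ind: "Y \<in> LF \<Longrightarrow> A \<in> sets P \<Longrightarrow> (\<lambda>x. indicator A x * Y x) \<in> LF"
  using LF by (auto simp: rv_lattice_def)

lemma G_sets: "A \<in> sets G \<Longrightarrow> A \<in> sets P"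
  using G by (auto simp: subalgebra_def)

lemma G_meas: "f \<in> borel_measurable G \<Longrightarrow> f \<in> borel_measurable P"
  using G by (rule measurable_from_subalg)

lemma int_Q: "Y \<in> LF \<Longrightarrow> integrable Q Y"
  unfolding dens_meas_def
  by (subst integrable_density) (use dual LF_meas Znn in auto)

lemma finQ: "finite_measure Q"
proof -
  have "emeasure Q (space Q) = (\<integral>\<^sup>+x. ennreal (Z x) \<partial>P)"
    by (simp add: dens_meas_def emeasure_density)
  also have "\<dots> = ennreal (integral\<^sup>L P Z)"
    by (rule nn_integral_eq_integral[OF Zint Znn])
  finally show ?thesis by (intro finite_measureI) auto
qed

lemma sfQ: "sigma_finite_subalgebra Q G"
proof -
  interpret finite_measure Q by (rule finQ)
  have "finite_measure_subalgebra Q G"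
    by unfold_locales (use G in \<open>auto simp: subalgebra_def\<close>)
  then show ?thesis by (rule finite_measure_subalgebra_is_sigma_finite)
qed

lemma AE_P_Q: "AE x in P. p x \<Longrightarrow> AE x in Q. p x"
  unfolding dens_meas_def by (subst AE_density) (auto elim: AE_mp)

lemma adm_X: "adm X"
  using X by (simp add: admissible_def)

lemma adm_LF: "adm \<xi> \<Longrightarrow> \<xi> \<in> LF"
  by (simp add: admissible_def)

lemma comb:
  assumes a1: "adm \<xi>1" and a2: "adm \<xi>2"
  shows "\<exists>\<xi>. adm \<xi> \<and> (AE x in P. \<pi> \<xi> x = min (\<pi> \<xi>1 x) (\<pi> \<xi>2 x))"
proof -
  have l1: "\<xi>1 \<in> LF" and l2: "\<xi>2 \<in> LF" using a1 a2 by (auto simp: admissible_def)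
  have m1[measurable]: "\<pi> \<xi>1 \<in> borel_measurable G" and m2[measurable]: "\<pi> \<xi>2 \<in> borel_measurable G"
    using piG l1 l2 by auto
  define A where "A = {x\<in>space G. \<pi> \<xi>1 x \<le> \<pi> \<xi>2 x}"
  have AG[measurable]: "A \<in> sets G" unfolding A_def by measurable
  have AP: "A \<in> sets P" using AG by (rule G_sets)
  have spG: "space G = space P" using G by (simp add: subalgebra_def)
  have AcP: "space P - A \<in> sets P" using AP by auto
  have AcG[measurable]: "space P - A \<in> sets G" using AG spG by (metis sets.compl_sets)
  define \<xi> where "\<xi> = (\<lambda>y. indicator A y * \<xi>1 y + indicator (space P - A) y * \<xi>2 y)"
  have i1: "(\<lambda>y. indicator A y * \<xi>1 y) \<in> LF" using LF_ind[OF l1 AP] .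
  have i2: "(\<lambda>y. indicator (space P - A) y * \<xi>2 y) \<in> LF" using LF_ind[OF l2 AcP] .
  have xiLF: "\<xi> \<in> LF" unfolding \<xi>_def using LF_add[OF i1 i2] .
  interpret S: sigma_finite_subalgebra Q G by (rule sfQ)
  have ind1: "(\<lambda>x. indicator A x :: real) \<in> borel_measurable G" by measurable
  have ind2: "(\<lambda>x. indicator (space P - A) x :: real) \<in> borel_measurable G" by measurable
  have mQ1: "\<xi>1 \<in> borel_measurable Q" using LF_meas[OF l1] by (simp cong: measurable_cong_sets)
  have mQ2: "\<xi>2 \<in> borel_measurable Q" using LF_meas[OF l2] by (simp cong: measurable_cong_sets)
  have e1: "AE x in Q. real_cond_exp Q G \<xi> x = real_cond_exp Q G (\<lambda>y. indicator A y * \<xi>1 y) x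
      + real_cond_exp Q G (\<lambda>y. indicator (space P - A) y * \<xi>2 y) x"
    unfolding \<xi>_def by (rule S.real_cond_exp_add) (use int_Q i1 i2 in auto)
  have e2: "AE x in Q. real_cond_exp Q G (\<lambda>y. indicator A y * \<xi>1 y) x = indicator A x * real_cond_exp Q G \<xi>1 x"
    by (rule S.real_cond_exp_mult[OF ind1 mQ1]) (use int_Q i1 in auto)
  have e3: "AE x in Q. real_cond_exp Q G (\<lambda>y. indicator (space P - A) y * \<xi>2 y) x = indicator (space P - A) x * real_cond_exp Q G \<xi>2 x"
    by (rule S.real_cond_exp_mult[OF ind2 mQ2]) (use int_Q i2 in auto)
  have g1: "AE x in Q. real_cond_exp Q G \<xi>1 x \<ge> real_cond_exp Q G X x" using a1 by (simp add: admissible_def)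
  have g2: "AE x in Q. real_cond_exp Q G \<xi>2 x \<ge> real_cond_exp Q G X x" using a2 by (simp add: admissible_def)
  have "AE x in Q. real_cond_exp Q G \<xi> x \<ge> real_cond_exp Q G X x"
    using e1 e2 e3 g1 g2 AE_space[of Q]
    by eventually_elim (auto simp: indicator_def)
  then have "adm \<xi>" using xiLF by (simp add: admissible_def)
  moreover have "AE x in P. \<pi> \<xi> x = min (\<pi> \<xi>1 x) (\<pi> \<xi>2 x)"
  proof -
    have "AE x in P. \<pi> \<xi> x = indicator A x * \<pi> \<xi>1 x + indicator (space P - A) x * \<pi> \<xi>2 x"
      using REG l1 l2 AG unfolding \<xi>_def by blast
    then show ?thesis using AE_space[of P]
      by eventually_elim (auto simp: indicator_def A_def spG)
  qed
  ultimately show ?thesis by blast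
qed

lemma piPm: "adm \<xi> \<Longrightarrow> \<pi> \<xi> \<in> borel_measurable P"
  using piG adm_LF G_meas by blast

lemma chain:
  assumes g: "\<And>j. adm (g j)"
  shows "\<exists>\<xi>. \<forall>m. adm (\<xi> m) \<and> (AE x in P. \<pi> (\<xi> (Suc m)) x \<le> \<pi> (\<xi> m) x)
            \<and> (AE x in P. \<pi> (\<xi> m) x \<le> \<pi> (g m) x)"
proof -
  define C where "C a b = (SOME \<xi>. adm \<xi> \<and> (AE x in P. \<pi> \<xi> x = min (\<pi> a x) (\<pi> b x)))" for a b
  have C: "adm (C a b) \<and> (AE x in P. \<pi> (C a b) x = min (\<pi> a x) (\<pi> b x))" if "adm a" "adm b" for a b
    using comb[OF that] unfolding C_def by (rule someI_ex)
  define \<xi> where "\<xi> = rec_nat (g 0) (\<lambda>m y. C y (g (Suc m)))"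
  have s0: "\<xi> 0 = g 0" and sS: "\<xi> (Suc m) = C (\<xi> m) (g (Suc m))" for m
    by (simp_all add: \<xi>_def)
  have a: "adm (\<xi> m)" for m
    by (induction m) (auto simp: s0 sS g C)
  have "AE x in P. \<pi> (\<xi> (Suc m)) x \<le> \<pi> (\<xi> m) x" for m
    using C[OF a g, of m "Suc m"] unfolding sS by (auto elim: AE_mp)
  moreover have "AE x in P. \<pi> (\<xi> m) x \<le> \<pi> (g m) x" for m
  proof (cases m)
    case 0 then show ?thesis by (simp add: s0)
  next
    case (Suc k) then show ?thesis
      using C[OF a g, of k "Suc k"] unfolding sS by (auto simp: sS elim: AE_mp)
  qed
  ultimately show ?thesis using a by blast
qed

lemma arctan_min: "arctan (min u v) = min (arctan u) (arctan v)"
  by (auto simp: min_def arctan_le_iff)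

lemma arctan_seq:
  "\<exists>\<eta> :: nat \<Rightarrow> 'a \<Rightarrow> real. (\<forall>n. adm (\<eta> n)) \<and>
     (\<forall>\<xi>. adm \<xi> \<longrightarrow> (AE x in P. (INF n. ereal (\<pi> (\<eta> n) x)) \<le> ereal (\<pi> \<xi> x)))"
proof -
  interpret p: prob_space P by (rule P)
  define a where "a \<xi> = (\<lambda>x. arctan (\<pi> \<xi> x))" for \<xi>
  define c where "c \<xi> = integral\<^sup>L P (a \<xi>)" for \<xi>
  have am: "adm \<xi> \<Longrightarrow> a \<xi> \<in> borel_measurable P" for \<xi>
    unfolding a_def using piPm by measurable
  have bnd: "norm (arctan u) \<le> pi/2" for u
    using arctan_bounded[of u] by auto
  have aint: "integrable P (a \<xi>)" if "adm \<xi>" for \<xi>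
  proof (rule p.integrable_const_bound[where B="pi/2"])
    show "AE x in P. norm (a \<xi> x) \<le> pi / 2" unfolding a_def using bnd by blast
  qed (rule am[OF that])
  have cge: "adm \<xi> \<Longrightarrow> - (pi/2) \<le> c \<xi>" for \<xi>
  proof -
    assume ad: "adm \<xi>"
    have "integral\<^sup>L P (\<lambda>_. - (pi/2)) \<le> c \<xi>"
      unfolding c_def by (rule integral_mono) (use aint[OF ad] arctan_bounded in \<open>auto simp: a_def less_imp_le\<close>)
    then show ?thesis by (simp add: p.prob_space)
  qed
  have cmono: "c \<xi> \<le> c \<xi>'" if "adm \<xi>" "adm \<xi>'" "AE x in P. \<pi> \<xi> x \<le> \<pi> \<xi>' x" for \<xi> \<xi>'
    unfolding c_def by (rule integral_mono_AE) (use that aint in \<open>auto simp: a_def arctan_le_iff elim: AE_mp\<close>)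
  define S where "S = c ` {\<xi>. adm \<xi>}"
  have Sne: "S \<noteq> {}" using adm_X by (auto simp: S_def)
  have Sbdd: "bdd_below S" unfolding S_def bdd_below_def using cge by blast
  define s where "s = Inf S"
  have sle: "adm \<xi> \<Longrightarrow> s \<le> c \<xi>" for \<xi>
    unfolding s_def S_def using Sbdd by (auto intro: cInf_lower simp: S_def)
  have "\<exists>\<xi>. adm \<xi> \<and> c \<xi> < s + 1 / (Suc n)" for n :: nat
  proof -
    have "Inf S < s + 1 / Suc n" by (simp add: s_def)
    from cInf_lessD[OF Sne this] show ?thesis by (auto simp: S_def)
  qed
  then obtain \<zeta> where z: "\<And>n. adm (\<zeta> n)" "\<And>n. c (\<zeta> n) < s + 1 / Suc n" by metis
  obtain \<eta> where e: "\<And>m. adm (\<eta> m)" "\<And>m. AE x in P. \<pi> (\<eta> (Suc m)) x \<le> \<pi> (\<eta> m) x"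
     "\<And>m. AE x in P. \<pi> (\<eta> m) x \<le> \<pi> (\<zeta> m) x"
    using chain[of \<zeta>] z by metis
  have ceta: "(\<lambda>n. c (\<eta> n)) \<longlonglongrightarrow> s"
  proof (rule tendsto_sandwich[where f="\<lambda>_. s" and h="\<lambda>n. s + 1 / Suc n"])
    show "\<forall>\<^sub>F n in sequentially. s \<le> c (\<eta> n)" using sle e by auto
    show "\<forall>\<^sub>F n in sequentially. c (\<eta> n) \<le> s + 1 / Suc n"
    proof (intro always_eventually allI)
      fix n
      show "c (\<eta> n) \<le> s + 1 / Suc n"
        using cmono[OF e(1) z(1) e(3), of n] z(2)[of n] by linarith
    qed
    have "(\<lambda>n. s + 1 / real (Suc n)) \<longlonglongrightarrow> s + 0"
      by (intro tendsto_intros LIMSEQ_Suc[OF lim_const_over_n])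
    then show "(\<lambda>n. s + 1 / real (Suc n)) \<longlonglongrightarrow> s" by simp
  qed simp
  have dec: "AE x in P. decseq (\<lambda>n. a (\<eta> n) x)"
  proof -
    have "AE x in P. \<forall>m. \<pi> (\<eta> (Suc m)) x \<le> \<pi> (\<eta> m) x"
      using e(2) by (simp add: AE_all_countable)
    then show ?thesis
      by eventually_elim (auto intro!: decseq_SucI simp: a_def arctan_le_iff)
  qed
  define l where "l x = lim (\<lambda>n. a (\<eta> n) x)" for x
  have lm: "l \<in> borel_measurable P"
    unfolding l_def using am[OF e(1)] by measurable
  have conv: "AE x in P. (\<lambda>n. a (\<eta> n) x) \<longlonglongrightarrow> l x"
    using dec
  proof eventually_elim
    case (elim x)
    have "\<forall>i. - (pi/2) \<le> a (\<eta> i) x" using arctan_bounded by (auto simp: a_def less_imp_le)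
    from decseq_convergent[OF elim this] obtain L where "(\<lambda>n. a (\<eta> n) x) \<longlonglongrightarrow> L" by blast
    then show ?case unfolding l_def by (simp add: limI)
  qed
  have wint: "integrable P (\<lambda>_. pi / 2)" by simp
  have lint: "integrable P l" and clim: "(\<lambda>n. c (\<eta> n)) \<longlonglongrightarrow> integral\<^sup>L P l"
    unfolding c_def
    by (rule integrable_dominated_convergence[OF lm _ wint conv] integral_dominated_convergence[OF lm _ wint conv];
        use am[OF e(1)] bnd in \<open>auto simp: a_def\<close>)+
  have ls: "integral\<^sup>L P l = s" using LIMSEQ_unique[OF clim ceta] .
  have "\<forall>\<xi>. adm \<xi> \<longrightarrow> (AE x in P. (INF n. ereal (\<pi> (\<eta> n) x)) \<le> ereal (\<pi> \<xi> x))"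
  proof (intro allI impI)
    fix \<xi> assume ad: "adm \<xi>"
    have "\<exists>\<theta>. adm \<theta> \<and> (AE x in P. \<pi> \<theta> x = min (\<pi> (\<eta> n) x) (\<pi> \<xi> x))" for n
      by (rule comb[OF e(1) ad])
    then obtain \<theta> where th: "\<And>n. adm (\<theta> n)" "\<And>n. AE x in P. \<pi> (\<theta> n) x = min (\<pi> (\<eta> n) x) (\<pi> \<xi> x)"
      by metis
    define mn where "mn x = min (l x) (a \<xi> x)" for x
    have mnm: "mn \<in> borel_measurable P" unfolding mn_def using lm am[OF ad] by measurable
    have conv2: "AE x in P. (\<lambda>n. a (\<theta> n) x) \<longlonglongrightarrow> mn x"
    proof -
      have "AE x in P. \<forall>n. \<pi> (\<theta> n) x = min (\<pi> (\<eta> n) x) (\<pi> \<xi> x)"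
        using th(2) by (simp add: AE_all_countable)
      then show ?thesis using conv
      proof eventually_elim
        case (elim x)
        have "(\<lambda>n. min (a (\<eta> n) x) (a \<xi> x)) \<longlonglongrightarrow> mn x"
          unfolding mn_def by (intro tendsto_intros elim(2))
        then show ?case using elim(1) by (simp add: a_def arctan_min)
      qed
    qed
    have mnint: "integrable P mn" and clim2: "(\<lambda>n. c (\<theta> n)) \<longlonglongrightarrow> integral\<^sup>L P mn"
      unfolding c_def
      by (rule integrable_dominated_convergence[OF mnm _ wint conv2] integral_dominated_convergence[OF mnm _ wint conv2];
          use am[OF th(1)] bnd in \<open>auto simp: a_def\<close>)+
    have "s \<le> integral\<^sup>L P mn"
      by (rule LIMSEQ_le_const[OF clim2]) (use sle th(1) in auto)
    then have "integral\<^sup>L P (\<lambda>x. l x - mn x) \<le> 0"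
      using ls lint mnint by simp
    moreover have "integral\<^sup>L P (\<lambda>x. l x - mn x) \<ge> 0"
      by (rule integral_nonneg_AE) (auto simp: mn_def)
    ultimately have "integral\<^sup>L P (\<lambda>x. l x - mn x) = 0" by simp
    then have "AE x in P. l x - mn x = 0"
    proof (subst (asm) integral_nonneg_eq_0_iff_AE)
      show "integrable P (\<lambda>x. l x - mn x)" using lint mnint by auto
      show "AE x in P. 0 \<le> l x - mn x" by (auto simp: mn_def)
    qed
    then show "AE x in P. (INF n. ereal (\<pi> (\<eta> n) x)) \<le> ereal (\<pi> \<xi> x)"
      using conv
    proof eventually_elim
      case (elim x)
      have lx: "l x \<le> arctan (\<pi> \<xi> x)" using elim(1) by (simp add: mn_def a_def)
      show ?case
      proof (rule ccontr)
        assume "\<not> ?case"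
        then have "ereal (\<pi> \<xi> x) < (INF n. ereal (\<pi> (\<eta> n) x))" by simp
        from ereal_dense2[OF this] obtain r where r: "ereal (\<pi> \<xi> x) < ereal r" "ereal r < (INF n. ereal (\<pi> (\<eta> n) x))"
          by blast
        have "r < \<pi> (\<eta> n) x" for n
        proof -
          have "ereal r < ereal (\<pi> (\<eta> n) x)"
            using r(2) INF_lower[of n UNIV "\<lambda>n. ereal (\<pi> (\<eta> n) x)"] by (blast intro: order.strict_trans2)
          then show ?thesis by simp
        qed
        then have "arctan r \<le> a (\<eta> n) x" for n
          by (simp add: a_def arctan_le_iff less_imp_le)
        then have "arctan r \<le> l x" by (intro LIMSEQ_le_const[OF elim(2)]) auto
        moreover have "arctan (\<pi> \<xi> x) < arctan r" using r(1) by (simp add: arctan_less_iff)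
        ultimately show False using lx by simp
      qed
    qed
  qed
  then show ?thesis using e(1) by blast
qed


lemma pi_on_mono:
  assumes "AE x in P. \<pi> Y x \<le> \<pi> Y' x"
  shows "pi_on P \<pi> A Y \<le> pi_on P \<pi> A Y'"
proof -
  have "{z. AE x in P. x \<in> A \<longrightarrow> ereal (\<pi> Y' x) \<le> z} \<subseteq> {z. AE x in P. x \<in> A \<longrightarrow> ereal (\<pi> Y x) \<le> z}"
  proof
    fix z assume "z \<in> {z. AE x in P. x \<in> A \<longrightarrow> ereal (\<pi> Y' x) \<le> z}"
    then have "AE x in P. x \<in> A \<longrightarrow> ereal (\<pi> Y' x) \<le> z" by simp
    then have "AE x in P. x \<in> A \<longrightarrow> ereal (\<pi> Y x) \<le> z"
      using assms
    proof eventually_elim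
      case (elim x)
      show ?case
      proof
        assume "x \<in> A"
        then have "ereal (\<pi> Y' x) \<le> z" using elim(1) by blast
        moreover have "ereal (\<pi> Y x) \<le> ereal (\<pi> Y' x)" using elim(2) by simp
        ultimately show "ereal (\<pi> Y x) \<le> z" by (rule order_trans[rotated])
      qed
    qed
    then show "z \<in> {z. AE x in P. x \<in> A \<longrightarrow> ereal (\<pi> Y x) \<le> z}" by simp
  qed
  then show ?thesis unfolding pi_on_def by (rule Inf_superset_mono)
qed

lemma pi_part_block:
  assumes p: "finite_G_partition G \<Gamma>" and A: "A \<in> \<Gamma>" and x: "x \<in> A"
  shows "pi_part P \<pi> \<Gamma> Y x = pi_on P \<pi> A Y"
proof -
  have fin: "finite \<Gamma>" and dis: "\<And>B. B \<in> \<Gamma> \<Longrightarrow> B \<noteq> A \<Longrightarrow> B \<inter> A = {}"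
    using p A by (auto simp: finite_G_partition_def)
  have "pi_part P \<pi> \<Gamma> Y x = (if x \<in> A then pi_on P \<pi> A Y else 0) +
      (\<Sum>B\<in>\<Gamma> - {A}. if x \<in> B then pi_on P \<pi> B Y else 0)"
    unfolding pi_part_def by (rule sum.remove[OF fin A])
  also have "(\<Sum>B\<in>\<Gamma> - {A}. if x \<in> B then pi_on P \<pi> B Y else 0) = 0"
  proof (rule sum.neutral, rule ballI)
    fix B assume "B \<in> \<Gamma> - {A}"
    then have "x \<notin> B" using dis[of B] x by blast
    then show "(if x \<in> B then pi_on P \<pi> B Y else 0) = 0" by simp
  qed
  finally show ?thesis using x by simp
qed

lemma pi_part_meas:
  assumes p: "finite_G_partition G \<Gamma>"
  shows "pi_part P \<pi> \<Gamma> Y \<in> borel_measurable G"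
  unfolding pi_part_def
proof (rule borel_measurable_ereal_sum)
  fix A assume "A \<in> \<Gamma>"
  then have [measurable]: "A \<in> sets G" using p by (auto simp: finite_G_partition_def)
  show "(\<lambda>x. if x \<in> A then pi_on P \<pi> A Y else 0) \<in> borel_measurable G" by measurable
qed

lemma fam:
  "\<exists>f :: nat \<Rightarrow> 'a \<Rightarrow> real. (\<forall>n. adm (f n)) \<and> (\<forall>\<xi>. adm \<xi> \<longrightarrow> (INF n. pi_on P \<pi> A (f n)) \<le> pi_on P \<pi> A \<xi>)"
proof -
  define S where "S = (\<lambda>\<xi>. pi_on P \<pi> A \<xi>) ` {\<xi>. adm \<xi>}"
  have "S \<noteq> {}" using adm_X by (auto simp: S_def)
  from Inf_countable_INF[OF this] obtain f' :: "nat \<Rightarrow> ereal" where f': "range f' \<subseteq> S" "Inf S = (INF i. f' i)" by auto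
  have "\<forall>n. \<exists>\<xi>. adm \<xi> \<and> f' n = pi_on P \<pi> A \<xi>"
  proof
    fix n have "f' n \<in> S" using f'(1) by blast
    then show "\<exists>\<xi>. adm \<xi> \<and> f' n = pi_on P \<pi> A \<xi>" unfolding S_def by blast
  qed
  then obtain f where f: "\<And>n. adm (f n)" "\<And>n. f' n = pi_on P \<pi> A (f n)" by metis
  have "(INF n. pi_on P \<pi> A (f n)) \<le> pi_on P \<pi> A \<xi>" if "adm \<xi>" for \<xi>
  proof -
    have "(INF n. pi_on P \<pi> A (f n)) = Inf S" using f'(2) f(2) by simp
    also have "\<dots> \<le> pi_on P \<pi> A \<xi>" using that unfolding S_def by (intro Inf_lower) blast
    finally show ?thesis .
  qed
  then show ?thesis using f(1) by blast
qed

lemma ess_unique: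
  assumes "is_ess_inf P N S Y1" "is_ess_inf P N S Y2"
  shows "AE x in P. Y1 x = Y2 x"
proof -
  have "AE x in P. Y1 x \<le> Y2 x" using assms unfolding is_ess_inf_def by blast
  moreover have "AE x in P. Y2 x \<le> Y1 x" using assms unfolding is_ess_inf_def by blast
  ultimately show ?thesis by eventually_elim simp
qed

lemma ess_fam:
  assumes "is_ess_inf P N S Y"
  shows "AE x in P. Y x = ess_inf_fam P N S x"
proof -
  have "is_ess_inf P N S (ess_inf_fam P N S)"
    unfolding ess_inf_fam_def by (rule someI[of "is_ess_inf P N S" Y, OF assms])
  from ess_unique[OF assms this] show ?thesis .
qed


lemma main:
  fixes \<Gamma> :: "nat \<Rightarrow> 'a set set"
  assumes parts: "\<forall>h. finite_G_partition G (\<Gamma> h)"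
  shows "\<exists>\<xi> :: nat \<Rightarrow> ('a \<Rightarrow> real).
     (\<forall>m. \<xi> m \<in> LF) \<and>
     (\<forall>m. AE x in dens_meas P Z.
            real_cond_exp (dens_meas P Z) G (\<xi> m) x \<ge> real_cond_exp (dens_meas P Z) G X x) \<and>
     (AE x in P. decseq (\<lambda>m. \<pi> (\<xi> m) x) \<and>
                 (\<lambda>m. ereal (\<pi> (\<xi> m) x)) \<longlonglongrightarrow> Kfun P G LF \<pi> X Z x) \<and>
     (\<forall>h. AE x in P. decseq (\<lambda>m. pi_part P \<pi> (\<Gamma> h) (\<xi> m) x) \<and>
                 (\<lambda>m. pi_part P \<pi> (\<Gamma> h) (\<xi> m) x) \<longlonglongrightarrow> Kpart P G LF \<pi> (\<Gamma> h) X Z x)"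
proof -
  have spG: "space G = space P" using G by (simp add: subalgebra_def)
  obtain \<eta> :: "nat \<Rightarrow> 'a \<Rightarrow> real" where eta: "\<And>n. adm (\<eta> n)"
    "\<And>\<xi>. adm \<xi> \<Longrightarrow> AE x in P. (INF n. ereal (\<pi> (\<eta> n) x)) \<le> ereal (\<pi> \<xi> x)"
    using arctan_seq by blast
  have "\<forall>A. \<exists>f :: nat \<Rightarrow> 'a \<Rightarrow> real. (\<forall>n. adm (f n)) \<and> (\<forall>\<xi>. adm \<xi> \<longrightarrow> (INF n. pi_on P \<pi> A (f n)) \<le> pi_on P \<pi> A \<xi>)"
    using fam by blast
  then obtain F :: "'a set \<Rightarrow> nat \<Rightarrow> 'a \<Rightarrow> real" where F: "\<And>A n. adm (F A n)"
    "\<And>A \<xi>. adm \<xi> \<Longrightarrow> (INF n. pi_on P \<pi> A (F A n)) \<le> pi_on P \<pi> A \<xi>"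
    by metis
  define gg where "gg k n = (if k = 0 then \<eta> n else
      F (from_nat_into (\<Gamma> (fst (prod_decode (k - 1)))) (snd (prod_decode (k - 1)))) n)" for k n
  define g where "g j = gg (fst (prod_decode j)) (snd (prod_decode j))" for j
  have gadm: "adm (g j)" for j unfolding g_def gg_def using eta(1) F(1) by simp
  obtain \<xi> where xi: "\<And>m. adm (\<xi> m)" "\<And>m. AE x in P. \<pi> (\<xi> (Suc m)) x \<le> \<pi> (\<xi> m) x"
     "\<And>m. AE x in P. \<pi> (\<xi> m) x \<le> \<pi> (g m) x"
    using chain[of g] gadm by metis
  have gdom: "AE x in P. \<pi> (\<xi> (prod_encode (k, n))) x \<le> \<pi> (gg k n) x" for k n
    using xi(3)[of "prod_encode (k, n)"] by (simp add: g_def)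
  have piGm: "\<pi> (\<xi> m) \<in> borel_measurable G" for m using piG adm_LF[OF xi(1)] by blast
  have decAE: "AE x in P. decseq (\<lambda>m. \<pi> (\<xi> m) x)"
  proof -
    have "AE x in P. \<forall>m. \<pi> (\<xi> (Suc m)) x \<le> \<pi> (\<xi> m) x"
      using xi(2) by (simp add: AE_all_countable)
    then show ?thesis by eventually_elim (auto intro!: decseq_SucI)
  qed
  define L where "L x = (INF m. ereal (\<pi> (\<xi> m) x))" for x
  define S0 where "S0 = {(\<lambda>x. ereal (\<pi> \<xi>' x)) | \<xi>'. adm \<xi>'}"
  have essL: "is_ess_inf P G S0 L"
    unfolding is_ess_inf_def
  proof (intro conjI ballI impI)
    show "L \<in> borel_measurable G" unfolding L_def using piGm by measurable
  next
    fix f assume "f \<in> S0"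
    then obtain \<xi>' where ad: "adm \<xi>'" and f: "f = (\<lambda>x. ereal (\<pi> \<xi>' x))" unfolding S0_def by blast
    have "AE x in P. \<forall>n. \<pi> (\<xi> (prod_encode (0, n))) x \<le> \<pi> (gg 0 n) x"
      using gdom by (simp add: AE_all_countable)
    then show "AE x in P. L x \<le> f x" using eta(2)[OF ad]
    proof eventually_elim
      case (elim x)
      have "L x \<le> (INF n. ereal (\<pi> (\<eta> n) x))"
      proof (rule INF_greatest)
        fix n
        have "L x \<le> ereal (\<pi> (\<xi> (prod_encode (0, n))) x)" unfolding L_def by (rule INF_lower) simp
        also have "\<dots> \<le> ereal (\<pi> (\<eta> n) x)" using elim(1) by (simp add: gg_def)
        finally show "L x \<le> ereal (\<pi> (\<eta> n) x)" .
      qed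
      then show ?case using elim(2) f by simp
    qed
  next
    fix Y' assume Y'm: "Y' \<in> borel_measurable G" and lb: "\<forall>f\<in>S0. AE x in P. Y' x \<le> f x"
    have "\<forall>m. AE x in P. Y' x \<le> ereal (\<pi> (\<xi> m) x)"
    proof
      fix m have "(\<lambda>x. ereal (\<pi> (\<xi> m) x)) \<in> S0" using xi(1) unfolding S0_def by blast
      from bspec[OF lb this] show "AE x in P. Y' x \<le> ereal (\<pi> (\<xi> m) x)" by simp
    qed
    then have "AE x in P. \<forall>m. Y' x \<le> ereal (\<pi> (\<xi> m) x)" by (simp add: AE_all_countable)
    then show "AE x in P. Y' x \<le> L x" unfolding L_def by eventually_elim (auto intro: INF_greatest)
  qed
  have KL: "AE x in P. L x = Kfun P G LF \<pi> X Z x"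
    unfolding Kfun_def using ess_fam[OF essL] unfolding S0_def .
  have part1: "AE x in P. decseq (\<lambda>m. \<pi> (\<xi> m) x) \<and>
                 (\<lambda>m. ereal (\<pi> (\<xi> m) x)) \<longlonglongrightarrow> Kfun P G LF \<pi> X Z x"
    using decAE KL
  proof eventually_elim
    case (elim x)
    have "decseq (\<lambda>m. ereal (\<pi> (\<xi> m) x))" using elim(1) by (auto simp: decseq_def)
    from LIMSEQ_INF[OF this] show ?case using elim by (simp add: L_def)
  qed
  have part2: "AE x in P. decseq (\<lambda>m. pi_part P \<pi> (\<Gamma> h) (\<xi> m) x) \<and>
                 (\<lambda>m. pi_part P \<pi> (\<Gamma> h) (\<xi> m) x) \<longlonglongrightarrow> Kpart P G LF \<pi> (\<Gamma> h) X Z x" for h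
  proof -
    have ph: "finite_G_partition G (\<Gamma> h)" using parts by blast
    have cov: "\<exists>A\<in>\<Gamma> h. x \<in> A" if "x \<in> space P" for x
      using ph that spG by (auto simp: finite_G_partition_def)
    have cnt: "countable (\<Gamma> h)" using ph by (auto simp: finite_G_partition_def intro: countable_finite)
    have ponmono: "pi_on P \<pi> A (\<xi> (Suc m)) \<le> pi_on P \<pi> A (\<xi> m)" for A m
      by (rule pi_on_mono[OF xi(2)])
    define M where "M x = (INF m. pi_part P \<pi> (\<Gamma> h) (\<xi> m) x)" for x
    define S1 where "S1 = {pi_part P \<pi> (\<Gamma> h) \<xi>' | \<xi>'. adm \<xi>'}"
    have essM: "is_ess_inf P G S1 M"
      unfolding is_ess_inf_def
    proof (intro conjI ballI impI)
      show "M \<in> borel_measurable G" unfolding M_def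
        by (intro borel_measurable_INF pi_part_meas[OF ph]) auto
    next
      fix f assume "f \<in> S1"
      then obtain \<xi>' where ad: "adm \<xi>'" and f: "f = pi_part P \<pi> (\<Gamma> h) \<xi>'" unfolding S1_def by blast
      have "M x \<le> f x" if x: "x \<in> space P" for x
      proof -
        obtain A where A: "A \<in> \<Gamma> h" "x \<in> A" using cov[OF x] by blast
        obtain i where i: "from_nat_into (\<Gamma> h) i = A" using from_nat_into_surj[OF cnt A(1)] by blast
        define k where "k = Suc (prod_encode (h, i))"
        have ggk: "gg k n = F A n" for n unfolding gg_def k_def using i by simp
        have "M x \<le> (INF n. pi_on P \<pi> A (F A n))"
        proof (rule INF_greatest)
          fix n
          have "M x \<le> pi_part P \<pi> (\<Gamma> h) (\<xi> (prod_encode (k, n))) x" unfolding M_def by (rule INF_lower) simp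
          also have "\<dots> = pi_on P \<pi> A (\<xi> (prod_encode (k, n)))" by (rule pi_part_block[OF ph A])
          also have "\<dots> \<le> pi_on P \<pi> A (F A n)" using pi_on_mono[OF gdom[of k n]] by (simp add: ggk)
          finally show "M x \<le> pi_on P \<pi> A (F A n)" .
        qed
        also have "\<dots> \<le> pi_on P \<pi> A \<xi>'" by (rule F(2)[OF ad])
        also have "\<dots> = f x" unfolding f by (rule pi_part_block[OF ph A, symmetric])
        finally show ?thesis .
      qed
      then show "AE x in P. M x \<le> f x" by (intro AE_I2)
    next
      fix Y' assume Y'm: "Y' \<in> borel_measurable G" and lb: "\<forall>f\<in>S1. AE x in P. Y' x \<le> f x"
      have "\<forall>m. AE x in P. Y' x \<le> pi_part P \<pi> (\<Gamma> h) (\<xi> m) x"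
      proof
        fix m have "pi_part P \<pi> (\<Gamma> h) (\<xi> m) \<in> S1" using xi(1) unfolding S1_def by blast
        from bspec[OF lb this] show "AE x in P. Y' x \<le> pi_part P \<pi> (\<Gamma> h) (\<xi> m) x" by simp
      qed
      then have "AE x in P. \<forall>m. Y' x \<le> pi_part P \<pi> (\<Gamma> h) (\<xi> m) x" by (simp add: AE_all_countable)
      then show "AE x in P. Y' x \<le> M x" unfolding M_def by eventually_elim (auto intro: INF_greatest)
    qed
    have KM: "AE x in P. M x = Kpart P G LF \<pi> (\<Gamma> h) X Z x"
      unfolding Kpart_def using ess_fam[OF essM] unfolding S1_def .
    have "decseq (\<lambda>m. pi_part P \<pi> (\<Gamma> h) (\<xi> m) x)" if x: "x \<in> space P" for x
    proof -
      obtain A where A: "A \<in> \<Gamma> h" "x \<in> A" using cov[OF x] by blast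
      show ?thesis
        by (rule decseq_SucI) (simp add: pi_part_block[OF ph A] ponmono)
    qed
    then have "AE x in P. decseq (\<lambda>m. pi_part P \<pi> (\<Gamma> h) (\<xi> m) x)" by (intro AE_I2)
    then show ?thesis using KM
    proof eventually_elim
      case (elim x)
      from LIMSEQ_INF[OF elim(1)] show ?case using elim by (simp add: M_def)
    qed
  qed
  have "\<forall>m. \<xi> m \<in> LF" using xi(1) adm_LF by blast
  moreover have "\<forall>m. AE x in dens_meas P Z.
            real_cond_exp (dens_meas P Z) G (\<xi> m) x \<ge> real_cond_exp (dens_meas P Z) G X x"
    using xi(1) by (simp add: admissible_def)
  ultimately show ?thesis using part1 part2 by blast
qed

end

theorem lemma31:
  fixes P G :: "'a measure"
    and LF LG Ls :: "('a \<Rightarrow> real) set"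
    and \<pi> :: "('a \<Rightarrow> real) \<Rightarrow> ('a \<Rightarrow> real)"
    and \<Gamma> :: "nat \<Rightarrow> 'a set set"
    and X Z :: "'a \<Rightarrow> real"
  assumes P: "prob_space P"
    and G: "subalgebra P G"
    and LF: "rv_lattice P P LF"
    and LG: "rv_lattice P G LG"
    and Ls_L1: "\<forall>Z'\<in>Ls. integrable P Z'"
    and Ls_dual: "\<forall>Z'\<in>Ls. \<forall>Y\<in>LF. integrable P (\<lambda>x. Z' x * Y x)"
    and Ls_lattice: "\<forall>Z1\<in>Ls. \<forall>Z2\<in>Ls. (\<lambda>x. Z1 x + Z2 x) \<in> Ls \<and> (\<lambda>x. max (Z1 x) (Z2 x)) \<in> Ls"
    and Ls_scal: "\<forall>Z'\<in>Ls. \<forall>c::real. (\<lambda>x. c * Z' x) \<in> Ls"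
    and Ls_ind: "\<forall>Z'\<in>Ls. \<forall>A\<in>sets P. (\<lambda>x. indicator A x * Z' x) \<in> Ls"
    and pi_maps: "\<forall>Y\<in>LF. \<pi> Y \<in> LG"
    and pi_class: "\<forall>Y1\<in>LF. \<forall>Y2\<in>LF. (AE x in P. Y1 x = Y2 x) \<longrightarrow> (AE x in P. \<pi> Y1 x = \<pi> Y2 x)"
    and REG: "\<forall>Y1\<in>LF. \<forall>Y2\<in>LF. \<forall>A\<in>sets G.
       AE x in P. \<pi> (\<lambda>y. indicator A y * Y1 y + indicator (space P - A) y * Y2 y) x
                 = indicator A x * \<pi> Y1 x + indicator (space P - A) x * \<pi> Y2 x"
    and parts: "\<forall>h. finite_G_partition G (\<Gamma> h)"
    and X: "X \<in> LF"
    and Z: "Z \<in> Ls \<inter> prob_densities P"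
  shows "\<exists>\<xi> :: nat \<Rightarrow> ('a \<Rightarrow> real).
     (\<forall>m. \<xi> m \<in> LF) \<and>
     (\<forall>m. AE x in dens_meas P Z.
            real_cond_exp (dens_meas P Z) G (\<xi> m) x \<ge> real_cond_exp (dens_meas P Z) G X x) \<and>
     (AE x in P. decseq (\<lambda>m. \<pi> (\<xi> m) x) \<and>
                 (\<lambda>m. ereal (\<pi> (\<xi> m) x)) \<longlonglongrightarrow> Kfun P G LF \<pi> X Z x) \<and>
     (\<forall>h. AE x in P. decseq (\<lambda>m. pi_part P \<pi> (\<Gamma> h) (\<xi> m) x) \<and>
                 (\<lambda>m. pi_part P \<pi> (\<Gamma> h) (\<xi> m) x) \<longlonglongrightarrow> Kpart P G LF \<pi> (\<Gamma> h) X Z x)"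
  proof -
  have i1: "\<forall>Y\<in>LF. \<pi> Y \<in> borel_measurable G"
    using pi_maps LG unfolding rv_lattice_def by blast
  have i2: "\<forall>Y\<in>LF. integrable P (\<lambda>x. Z x * Y x)" using Ls_dual Z by blast
  have i3: "Z \<in> prob_densities P" using Z by blast
  interpret L31 P G LF \<pi> X Z by (rule L31.intro[OF P G LF i1 i2 REG X i3])
  show ?thesis by (rule main[OF parts])
qed

end
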